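(* Let $k\ge0$ be an integer. Define $$P^*(x)=(1+x)^4\big(1+(2k+4)x^2\big)^{2k+1},$$ let $A^*(x)$ be the polynomial of degree at most $2k+3$ obtained by truncating the power series of $(1+x)^2\big(1+(2k+4)x^2\big)^{(2k+1)/2}$ at degree $2k+3$, i.e. $(1+x)^2(1+(2k+4)x^2)^{(2k+1)/2}=A^*(x)+O(x^{2k+4})$ as $x\to0$, and let $Q^*=(A^* )^2$. Then $$P^*(x)-Q^*(x)=O(x^{2k+5})\quad\text{as }x\to0,$$ i.e. $x^{2k+5}$ divides $P^*-Q^*$. Equivalently, with $P(x)=(x+1)^4(x^2+2k+4)^{2k+1}$ and $A(x)=x^{2k+3}A^*(1/x)$, one has $\deg\big(P-A^2\big)\le 2k+1$.
   Context: For a polynomial $F$ of degree $d$, its reciprocal is $F^*(x)=x^dF(1/x)$. This gives the Davenport–Zannier pair (black vertices of degrees $4,2k+1,2k+1$, all white vertices of degree 2, total weight $4k+6$) for the weighted tree of series $J$. *)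

theory Defs
  imports "HOL-Computational_Algebra.Computational_Algebra" "HOL-Computational_Algebra.Polynomial_FPS"
begin

definition P_star :: "nat \<Rightarrow> real poly" where
  "P_star k = [:1, 1:] ^ 4 * [:1, 0, of_nat (2*k+4):] ^ (2*k+1)"

text \<open>The power series (1+x)^2 (1+(2k+4)x^2)^((2k+1)/2), where the real power
  (1+t)^a is the binomial series  sum_n (a gchoose n) t^n, composed with t = (2k+4) x^2.\<close>
definition A_series :: "nat \<Rightarrow> real fps" where
  "A_series k = fps_of_poly ([:1, 1:] ^ 2) *
     (fps_binomial ((2 * real k + 1) / 2) oo (fps_const (of_nat (2*k+4)) * fps_X ^ 2))"

text \<open>A*: truncation of that series at degree 2k+3 (keeps coefficients of x^0..x^(2k+3)).\<close>
definition A_star :: "nat \<Rightarrow> real poly" where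
  "A_star k = truncate_fps (2*k+4) (A_series k)"

end

theory Submission
  imports Defs
begin

lemma compose_sq_nth:
  fixes f :: "real fps"
  shows "(f oo (fps_const c * fps_X ^ 2)) $ n = (if even n then f $ (n div 2) * c ^ (n div 2) else 0)"
proof -
  have pw: "(fps_const c * fps_X ^ 2) ^ i = fps_const (c ^ i) * fps_X ^ (2*i)" for i
    by (simp only: power_mult_distrib fps_const_power power_mult)
  have "(f oo (fps_const c * fps_X ^ 2)) $ n = (\<Sum>i\<in>{0..n}. if i = n div 2 \<and> even n then f $ i * c ^ i else 0)"
    unfolding fps_compose_nth pw by (intro sum.cong) auto
  also have "\<dots> = (if even n then f $ (n div 2) * c ^ (n div 2) else 0)"
    by (cases "even n") (auto simp: sum.delta)
  finally show ?thesis .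
qed

lemma gch:
  fixes k :: nat
  defines "a \<equiv> (2 * real k + 1) / 2"
  shows "(a gchoose (k+2)) * (2*real k+4) ^ (k+2) + (a gchoose (k+1)) * (2*real k+4) ^ (k+1) = 0"
proof -
  have m: "a * (a gchoose (k+1)) = of_nat (k+1) * (a gchoose (k+1)) + of_nat (Suc (k+1)) * (a gchoose (Suc (k+1)))"
    by (rule gbinomial_mult_1)
  have e: "(2*real k + 4) * (a gchoose (k+2)) = - (a gchoose (k+1))"
    using m unfolding a_def by (simp add: algebra_simps)
  have "(a gchoose (k+2)) * (2*real k+4) ^ (k+2) + (a gchoose (k+1)) * (2*real k+4) ^ (k+1)
      = (2*real k+4) ^ (k+1) * ((2*real k + 4) * (a gchoose (k+2)) + (a gchoose (k+1)))"
    by (simp add: algebra_simps)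
  also have "\<dots> = 0" using e by simp
  finally show ?thesis .
qed

lemma S_zero: "A_series k $ (2*k+4) = 0"
proof -
  define H where "H = fps_binomial ((2 * real k + 1) / 2) oo (fps_const (of_nat (2*k+4)) * fps_X ^ 2)"
  have F: "fps_of_poly ([:1, 1:] ^ 2) = 1 + 2 * fps_X + fps_X ^ 2"
    by (simp add: fps_of_poly_power fps_of_poly_pCons power2_eq_square algebra_simps)
  have S: "A_series k = H + fps_X * H + fps_X * H + fps_X ^ 2 * H"
    unfolding A_series_def H_def[symmetric] F by (simp add: algebra_simps)
  have Hn: "H $ n = (if even n then ((2 * real k + 1) / 2 gchoose (n div 2)) * (2*real k+4) ^ (n div 2) else 0)" for n
    unfolding H_def compose_sq_nth by simp
  have "A_series k $ (2*k+4) = H $ (2*k+4) + 2 * H $ (2*k+3) + H $ (2*k+2)"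
  proof -
    have e: "2*k+4 - 1 = 2*k+3" by simp
    have a1: "(fps_X * H) $ (2*k+4) = H $ (2*k+3)" by (simp only: fps_X_mult_nth e) simp
    have a2: "(fps_X ^ 2 * H) $ (2*k+4) = H $ (2*k+2)" by (simp add: fps_X_power_mult_nth)
    show ?thesis unfolding S fps_add_nth a1 a2 by simp
  qed
  also have "\<dots> = ((2 * real k + 1) / 2 gchoose (k+2)) * (2*real k+4) ^ (k+2) + ((2 * real k + 1) / 2 gchoose (k+1)) * (2*real k+4) ^ (k+1)"
    unfolding Hn by simp
  also have "\<dots> = 0" by (rule gch)
  finally show ?thesis .
qed

lemma S_sq: "A_series k ^ 2 = fps_of_poly (P_star k)"
proof -
  define G :: "real fps" where "G = fps_const (of_nat (2*k+4)) * fps_X ^ 2"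
  have G0: "G $ 0 = 0" unfolding G_def by simp
  have "(fps_binomial ((2 * real k + 1) / 2) oo G) ^ 2 = fps_binomial ((2 * real k + 1) / 2) ^ 2 oo G"
    by (rule fps_compose_power[OF G0])
  also have "fps_binomial ((2 * real k + 1) / 2) ^ 2 = fps_binomial (of_nat (2*k+1))"
  proof -
    have "of_nat 2 * ((2 * real k + 1) / 2) = of_nat (2*k+1)" by simp
    then show ?thesis by (simp only: fps_binomial_power)
  qed
  also have "\<dots> = (1 + fps_X) ^ (2*k+1)" by (rule fps_binomial_of_nat)
  also have "(1 + fps_X) ^ (2*k+1) oo G = (1 + G) ^ (2*k+1)"
  proof -
    have "(1 + fps_X) oo G = 1 + G" by (simp add: fps_compose_add_distrib G0)
    with fps_compose_power[OF G0, of "1+fps_X" "2*k+1"] show ?thesis by simp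
  qed
  finally have B: "(fps_binomial ((2 * real k + 1) / 2) oo G) ^ 2 = (1 + G) ^ (2*k+1)" .
  have F: "fps_of_poly ([:1, 1:] ^ 2) = (1 + fps_X) ^ 2"
    by (simp add: fps_of_poly_power fps_of_poly_pCons add.commute)
  have l1: "fps_of_poly [:1, 1:] = (1 + fps_X :: real fps)"
    by (simp add: fps_of_poly_linear')
  have l2: "fps_of_poly [:1, 0, of_nat (2*k+4):] = 1 + G"
    unfolding G_def by (simp add: fps_of_poly_pCons algebra_simps power2_eq_square)
  have P: "fps_of_poly (P_star k) = (1 + fps_X) ^ 4 * (1 + G) ^ (2*k+1)"
    unfolding P_star_def by (simp only: fps_of_poly_mult fps_of_poly_power l1 l2)
  show ?thesis
    unfolding A_series_def G_def[symmetric] power_mult_distrib B F P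
    by (simp add: power_mult[symmetric])
qed

theorem mainTheorem9:
  fixes k :: nat
  shows "(monom 1 (2*k+5) :: real poly) dvd (P_star k - (A_star k) ^ 2)"
proof (unfold monom_1_dvd_iff', intro allI impI)
  fix i assume i: "i < 2*k+5"
  let ?S = "A_series k"
  have agree: "coeff (A_star k) j = ?S $ j" if "j \<le> 2*k+4" for j
    using that S_zero[of k] unfolding A_star_def coeff_truncate_fps
    by (cases "j = 2*k+4") auto
  have "coeff (P_star k) i = (?S ^ 2) $ i" by (simp add: S_sq)
  also have "\<dots> = (\<Sum>j=0..i. ?S $ j * ?S $ (i - j))" by (simp add: power2_eq_square fps_mult_nth)
  also have "\<dots> = (\<Sum>j=0..i. coeff (A_star k) j * coeff (A_star k) (i - j))"
    using i by (intro sum.cong) (auto simp: agree)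
  also have "\<dots> = coeff ((A_star k) ^ 2) i"
    by (simp add: power2_eq_square coeff_mult atLeast0AtMost)
  finally show "coeff (P_star k - A_star k ^ 2) i = 0" by simp
qed

end
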